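(* (1) Let $X=(X,\mathcal O(X))$ be a locally super-compact $L$-sober space. Then $\Sigma_L\Omega_LX=(X,\mathcal O(X))$, i.e., the Scott $L$-topology of the specialization $L$-order of $X$ equals $\mathcal O(X)$. (2) Let $(P,e)$ be a continuous $L$-dcpo. Then $\Omega_L\Sigma_L(P,e)=(P,e)$, i.e., the specialization $L$-order of the Scott $L$-topology $\sigma_L(P)$ equals $e$.
   Context: $L$ is a frame with implication $\to$. $L$-subsets: maps to $L$; nonempty: $\bigvee A=1$; ${\rm sub}_X(A,B)=\bigwedge_xA(x)\to B(x)$. $L$-topology: $\mathcal O(X)\subseteq L^X$ closed under finite meets and arbitrary joins containing all constants $a_X$; interior $A^\circ$ is the join of open sets below $A$. Super-compact: nonempty $A$ with ${\rm sub}_X(A,\bigvee_iV_i)=\bigvee_i{\rm sub}_X(A,V_i)$ for all families of open $V_i$; ${\rm SC}(X)$ their set. Locally super-compact: every open $A=\bigvee_{B\in{\rm SC}(X)}{\rm sub}_X(B,A)\wedge B^\circ$. A point of $\mathcal O(X)$: $p:\mathcal O(X)\to L$ preserving binary meets, arbitrary joins, with $p(\lambda_X)=\lambda$; $[x](A)=A(x)$; $L$-sober: $x\mapsto[x]$ bijective onto the points. For a $T_0$ space, $\Omega_LX$ is $X$ with the specialization $L$-order $e(x,y)=\bigwedge_{A\in\mathcal O(X)}A(x)\to A(y)$. For an $L$-ordered set $(P,e)$ ($e(x,x)=1$, $e(x,y)\wedge e(y,z)\le e(x,z)$, $e(x,y)\wedge e(y,x)=1\Rightarrow x=y$): ${\downarrow}y(x)=e(x,y)$;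 $\sqcup A=x$ iff $e(x,y)={\rm sub}_P(A,{\downarrow}y)$ for all $y$; directed: nonempty and $D(x)\wedge D(y)\le\bigvee_zD(z)\wedge e(x,z)\wedge e(y,z)$; ideal: directed lower set; $L$-dcpo: all directed $L$-subsets have suprema; ${\Downarrow}x(y)=\bigwedge\{e(x,\sqcup I)\to I(y):I\text{ ideal with a supremum}\}$; continuous $L$-dcpo: $L$-dcpo with each ${\Downarrow}x$ directed and $\sqcup{\Downarrow}x=x$. Scott $L$-topology $\sigma_L(P)$: upper sets $A$ ($A(x)\wedge e(x,y)\le A(y)$) with $A(\sqcup D)=\bigvee_xA(x)\wedge D(x)$ for every directed $D$ having a supremum; $\Sigma_LP=(P,\sigma_L(P))$. *)

theory Defs
  imports Main
begin

text \<open>The frame L is a complete lattice type 'l together with an implication imp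
  satisfying the residuation law (which makes 'l a frame / complete Heyting algebra).\<close>

definition is_frame_impl :: "('l::complete_lattice \<Rightarrow> 'l \<Rightarrow> 'l) \<Rightarrow> bool" where
  "is_frame_impl imp \<longleftrightarrow> (\<forall>a b c. c \<le> imp a b \<longleftrightarrow> inf c a \<le> b)"

definition subL :: "('l::complete_lattice \<Rightarrow> 'l \<Rightarrow> 'l) \<Rightarrow> ('a \<Rightarrow> 'l) \<Rightarrow> ('a \<Rightarrow> 'l) \<Rightarrow> 'l" where
  "subL imp A B = (INF x. imp (A x) (B x))"

definition nonemptyL :: "('a \<Rightarrow> 'l::complete_lattice) \<Rightarrow> bool" where
  "nonemptyL A \<longleftrightarrow> (SUP x. A x) = top"

definition Ltopology :: "('a \<Rightarrow> 'l::complete_lattice) set \<Rightarrow> bool" where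
  "Ltopology T \<longleftrightarrow> (\<forall>U\<in>T. \<forall>V\<in>T. inf U V \<in> T) \<and> (\<forall>\<U>\<subseteq>T. Sup \<U> \<in> T)
      \<and> (\<forall>c. (\<lambda>_. c) \<in> T)"

definition interiorL :: "('a \<Rightarrow> 'l::complete_lattice) set \<Rightarrow> ('a \<Rightarrow> 'l) \<Rightarrow> ('a \<Rightarrow> 'l)" where
  "interiorL T A = Sup {U\<in>T. U \<le> A}"

definition super_compact :: "('l::complete_lattice \<Rightarrow> 'l \<Rightarrow> 'l) \<Rightarrow> ('a \<Rightarrow> 'l) set \<Rightarrow> ('a \<Rightarrow> 'l) \<Rightarrow> bool" where
  "super_compact imp T A \<longleftrightarrow> nonemptyL A \<and>
     (\<forall>\<V>\<subseteq>T. subL imp A (Sup \<V>) = (SUP V\<in>\<V>. subL imp A V))"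

definition SC :: "('l::complete_lattice \<Rightarrow> 'l \<Rightarrow> 'l) \<Rightarrow> ('a \<Rightarrow> 'l) set \<Rightarrow> ('a \<Rightarrow> 'l) set" where
  "SC imp T = {A. super_compact imp T A}"

definition locally_super_compact :: "('l::complete_lattice \<Rightarrow> 'l \<Rightarrow> 'l) \<Rightarrow> ('a \<Rightarrow> 'l) set \<Rightarrow> bool" where
  "locally_super_compact imp T \<longleftrightarrow>
     (\<forall>A\<in>T. A = (SUP B\<in>SC imp T. (\<lambda>x. inf (subL imp B A) (interiorL T B x))))"

text \<open>A point of T(X); only its values on T(X) are relevant.\<close>
definition is_point :: "('a \<Rightarrow> 'l::complete_lattice) set \<Rightarrow> (('a \<Rightarrow> 'l) \<Rightarrow> 'l) \<Rightarrow> bool" where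
  "is_point T p \<longleftrightarrow> (\<forall>U\<in>T. \<forall>V\<in>T. p (inf U V) = inf (p U) (p V))
     \<and> (\<forall>\<U>\<subseteq>T. p (Sup \<U>) = (SUP U\<in>\<U>. p U)) \<and> (\<forall>c. p (\<lambda>_. c) = c)"

text \<open>L-sober: x \<mapsto> [x] (as a map on T(X)) is a bijection onto the points.
  Points are identified when they agree on T(X).\<close>
definition L_sober :: "('a \<Rightarrow> 'l::complete_lattice) set \<Rightarrow> bool" where
  "L_sober T \<longleftrightarrow> (\<forall>x y. (\<forall>U\<in>T. U x = U y) \<longrightarrow> x = y)
     \<and> (\<forall>p. is_point T p \<longrightarrow> (\<exists>x. \<forall>U\<in>T. p U = U x))"

definition spec_order :: "('l::complete_lattice \<Rightarrow> 'l \<Rightarrow> 'l) \<Rightarrow> ('a \<Rightarrow> 'l) set \<Rightarrow> 'a \<Rightarrow> 'a \<Rightarrow> 'l" where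
  "spec_order imp T x y = (INF A\<in>T. imp (A x) (A y))"

definition L_order :: "('a \<Rightarrow> 'a \<Rightarrow> 'l::complete_lattice) \<Rightarrow> bool" where
  "L_order e \<longleftrightarrow> (\<forall>x. e x x = top) \<and> (\<forall>x y z. inf (e x y) (e y z) \<le> e x z)
     \<and> (\<forall>x y. inf (e x y) (e y x) = top \<longrightarrow> x = y)"

definition is_Lsup :: "('l::complete_lattice \<Rightarrow> 'l \<Rightarrow> 'l) \<Rightarrow> ('a \<Rightarrow> 'a \<Rightarrow> 'l) \<Rightarrow> ('a \<Rightarrow> 'l) \<Rightarrow> 'a \<Rightarrow> bool" where
  "is_Lsup imp e A x \<longleftrightarrow> (\<forall>y. e x y = subL imp A (\<lambda>z. e z y))"

definition directedL :: "('a \<Rightarrow> 'a \<Rightarrow> 'l::complete_lattice) \<Rightarrow> ('a \<Rightarrow> 'l) \<Rightarrow> bool" where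
  "directedL e D \<longleftrightarrow> nonemptyL D \<and>
     (\<forall>x y. inf (D x) (D y) \<le> (SUP z. inf (inf (D z) (e x z)) (e y z)))"

definition lower_setL :: "('a \<Rightarrow> 'a \<Rightarrow> 'l::complete_lattice) \<Rightarrow> ('a \<Rightarrow> 'l) \<Rightarrow> bool" where
  "lower_setL e A \<longleftrightarrow> (\<forall>x y. inf (A y) (e x y) \<le> A x)"

definition upper_setL :: "('a \<Rightarrow> 'a \<Rightarrow> 'l::complete_lattice) \<Rightarrow> ('a \<Rightarrow> 'l) \<Rightarrow> bool" where
  "upper_setL e A \<longleftrightarrow> (\<forall>x y. inf (A x) (e x y) \<le> A y)"

definition idealL :: "('a \<Rightarrow> 'a \<Rightarrow> 'l::complete_lattice) \<Rightarrow> ('a \<Rightarrow> 'l) \<Rightarrow> bool" where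
  "idealL e I \<longleftrightarrow> directedL e I \<and> lower_setL e I"

definition L_dcpo :: "('l::complete_lattice \<Rightarrow> 'l \<Rightarrow> 'l) \<Rightarrow> ('a \<Rightarrow> 'a \<Rightarrow> 'l) \<Rightarrow> bool" where
  "L_dcpo imp e \<longleftrightarrow> L_order e \<and> (\<forall>D. directedL e D \<longrightarrow> (\<exists>x. is_Lsup imp e D x))"

definition way_below :: "('l::complete_lattice \<Rightarrow> 'l \<Rightarrow> 'l) \<Rightarrow> ('a \<Rightarrow> 'a \<Rightarrow> 'l) \<Rightarrow> 'a \<Rightarrow> 'a \<Rightarrow> 'l" where
  "way_below imp e x y = Inf {imp (e x s) (I y) | I s. idealL e I \<and> is_Lsup imp e I s}"

definition continuous_L_dcpo :: "('l::complete_lattice \<Rightarrow> 'l \<Rightarrow> 'l) \<Rightarrow> ('a \<Rightarrow> 'a \<Rightarrow> 'l) \<Rightarrow> bool" where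
  "continuous_L_dcpo imp e \<longleftrightarrow> L_dcpo imp e \<and>
     (\<forall>x. directedL e (way_below imp e x) \<and> is_Lsup imp e (way_below imp e x) x)"

definition scottL :: "('l::complete_lattice \<Rightarrow> 'l \<Rightarrow> 'l) \<Rightarrow> ('a \<Rightarrow> 'a \<Rightarrow> 'l) \<Rightarrow> ('a \<Rightarrow> 'l) set" where
  "scottL imp e = {A. upper_setL e A \<and>
     (\<forall>D s. directedL e D \<and> is_Lsup imp e D s \<longrightarrow> A s = (SUP x. inf (A x) (D x)))}"

end

theory Submission
  imports Defs
begin

lemma fr:
  fixes imp :: "'l::complete_lattice \<Rightarrow> 'l \<Rightarrow> 'l"
  shows "is_frame_impl imp \<Longrightarrow> c \<le> imp a b \<longleftrightarrow> inf c a \<le> b"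
  by (simp add: is_frame_impl_def)

lemma inf_SUP_le:
  fixes imp :: "'l::complete_lattice \<Rightarrow> 'l \<Rightarrow> 'l" and b X :: 'l
  assumes F: "is_frame_impl imp" and h: "\<And>i. i\<in>S \<Longrightarrow> inf b (f i) \<le> X"
  shows "inf b (SUP i\<in>S. f i) \<le> X"
proof -
  have "(SUP i\<in>S. f i) \<le> imp b X"
  proof (rule SUP_least)
    fix i assume "i \<in> S"
    then have "inf (f i) b \<le> X" using h by (simp add: inf_commute)
    then show "f i \<le> imp b X" using fr[OF F] by blast
  qed
  then have "inf (SUP i\<in>S. f i) b \<le> X" using fr[OF F] by blast
  then show ?thesis by (simp add: inf_commute)
qed

lemma inf_SUP_le2:
  fixes imp :: "'l::complete_lattice \<Rightarrow> 'l \<Rightarrow> 'l" and b X :: 'l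
  assumes F: "is_frame_impl imp" and a: "a \<le> (SUP i\<in>S. f i)"
    and h: "\<And>i. i\<in>S \<Longrightarrow> inf b (f i) \<le> X"
  shows "inf b a \<le> X"
proof -
  have "inf b a \<le> inf b (SUP i\<in>S. f i)" by (rule inf_mono[OF order_refl a])
  also have "\<dots> \<le> X" by (rule inf_SUP_le[OF F h])
  finally show ?thesis .
qed

lemma inf_SUP_eq:
  fixes imp :: "'l::complete_lattice \<Rightarrow> 'l \<Rightarrow> 'l" and b :: 'l
  assumes F: "is_frame_impl imp"
  shows "inf b (SUP i\<in>S. f i) = (SUP i\<in>S. inf b (f i))"
proof (rule antisym)
  show "inf b (SUP i\<in>S. f i) \<le> (SUP i\<in>S. inf b (f i))"
    by (rule inf_SUP_le[OF F]) (rule SUP_upper)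
  show "(SUP i\<in>S. inf b (f i)) \<le> inf b (SUP i\<in>S. f i)"
    by (rule SUP_least) (intro inf_mono order_refl SUP_upper)
qed

lemma le_eqI: "(\<And>c. c \<le> a \<longleftrightarrow> c \<le> b) \<Longrightarrow> a = (b::'l::order)"
  by (rule antisym) auto

lemma lsup_char:
  fixes imp :: "'l::complete_lattice \<Rightarrow> 'l \<Rightarrow> 'l" and e :: "'b \<Rightarrow> 'b \<Rightarrow> 'l"
  assumes F: "is_frame_impl imp" and S: "is_Lsup imp e D s"
  shows "c \<le> e s y \<longleftrightarrow> (\<forall>z. inf c (D z) \<le> e z y)"
proof -
  have "e s y = subL imp D (\<lambda>z. e z y)" using S by (simp add: is_Lsup_def)
  then show ?thesis by (simp add: subL_def le_INF_iff fr[OF F])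
qed

lemma wb_char:
  fixes imp :: "'l::complete_lattice \<Rightarrow> 'l \<Rightarrow> 'l" and e :: "'b \<Rightarrow> 'b \<Rightarrow> 'l"
  assumes F: "is_frame_impl imp"
  shows "c \<le> way_below imp e x y \<longleftrightarrow>
    (\<forall>I s. idealL e I \<and> is_Lsup imp e I s \<longrightarrow> inf c (e x s) \<le> I y)"
  unfolding way_below_def le_Inf_iff using fr[OF F] by blast

lemma part2:
  fixes imp :: "'l::complete_lattice \<Rightarrow> 'l \<Rightarrow> 'l" and e :: "'b \<Rightarrow> 'b \<Rightarrow> 'l"
  assumes F: "is_frame_impl imp" and C: "continuous_L_dcpo imp e"
  shows "spec_order imp (scottL imp e) = e"
proof -
  have LO: "L_order e" and dirwb: "\<And>x. directedL e (way_below imp e x)"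
    and supwb: "\<And>x. is_Lsup imp e (way_below imp e x) x"
    using C unfolding continuous_L_dcpo_def L_dcpo_def by auto
  have refl: "\<And>x. e x x = top" and tr: "\<And>x y z. inf (e x y) (e y z) \<le> e x z"
    using LO unfolding L_order_def by auto
  let ?wb = "way_below imp e"
  have lsup_le: "D z \<le> e z s" if "is_Lsup imp e D s" for D s z
    using lsup_char[OF F that, of top s] refl[of s] by simp
  have wb_id: "inf (?wb x y) (e x s) \<le> I y" if "idealL e I" "is_Lsup imp e I s" for I s x y
    using wb_char[OF F, of "?wb x y" e x y] that by blast
  have wb_up: "inf (?wb x z) (e x x') \<le> ?wb x' z" for x x' z
    unfolding wb_char[OF F]
  proof (intro allI impI)
    fix I s assume h: "idealL e I \<and> is_Lsup imp e I s"
    have "inf (inf (?wb x z) (e x x')) (e x' s) \<le> inf (?wb x z) (e x s)"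
      using tr[of x x' s] by (simp add: inf_assoc le_infI2)
    also have "\<dots> \<le> I z" using wb_id h by blast
    finally show "inf (inf (?wb x z) (e x x')) (e x' s) \<le> I z" .
  qed
  have wb_low: "inf (?wb x u') (e u u') \<le> ?wb x u" for x u u'
    unfolding wb_char[OF F]
  proof (intro allI impI)
    fix I s assume h: "idealL e I \<and> is_Lsup imp e I s"
    have "inf (inf (?wb x u') (e u u')) (e x s) \<le> inf (inf (?wb x u') (e x s)) (e u u')"
      by (simp add: inf_commute inf_left_commute)
    also have "\<dots> \<le> inf (I u') (e u u')" using wb_id h by (meson inf_mono order_refl)
    also have "\<dots> \<le> I u" using h unfolding idealL_def lower_setL_def by blast
    finally show "inf (inf (?wb x u') (e u u')) (e x s) \<le> I u" .
  qed
  have down_ideal: "idealL e (\<lambda>u. e u y)" for y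
    unfolding idealL_def directedL_def nonemptyL_def lower_setL_def
  proof (intro conjI allI)
    show "(SUP u. e u y) = top" using refl[of y] by (metis SUP_upper UNIV_I top.extremum_uniqueI)
    fix x x'
    show "inf (e x y) (e x' y) \<le> (SUP z. inf (inf (e z y) (e x z)) (e x' z))"
      by (rule SUP_upper2[of y]) (simp_all add: refl)
  next
    fix x y'
    show "inf (e y' y) (e x y') \<le> e x y" using tr[of x y' y] by (simp add: inf_commute)
  qed
  have down_sup: "is_Lsup imp e (\<lambda>u. e u y) y" for y
    unfolding is_Lsup_def subL_def
  proof
    fix t
    show "e y t = (INF z. imp (e z y) (e z t))"
    proof (rule le_eqI)
      fix c
      show "c \<le> e y t \<longleftrightarrow> c \<le> (INF z. imp (e z y) (e z t))"
        unfolding le_INF_iff fr[OF F]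
      proof
        assume "c \<le> e y t"
        then show "\<forall>i\<in>UNIV. inf c (e i y) \<le> e i t"
          using tr by (metis inf_commute inf_mono order_refl order_trans)
      next
        assume "\<forall>i\<in>UNIV. inf c (e i y) \<le> e i t"
        then show "c \<le> e y t" using refl[of y] by (metis UNIV_I inf_top_right)
      qed
    qed
  qed
  have wb_le: "?wb x z \<le> e z x" for x z
    using wb_id[OF down_ideal[of x] down_sup[of x], of x z] refl[of x] by simp
  have opn: "(\<lambda>w. ?wb w z) \<in> scottL imp e" for z
    unfolding scottL_def
  proof (intro CollectI conjI allI impI)
    show "upper_setL e (\<lambda>w. ?wb w z)" unfolding upper_setL_def using wb_up by blast
    fix D s assume Ds: "directedL e D \<and> is_Lsup imp e D s"
    show "?wb s z = (SUP x. inf (?wb x z) (D x))"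
    proof (rule antisym)
      define I where "I u = (SUP w. inf (D w) (?wb w u))" for u
      have I_up: "inf (D w) (?wb w u) \<le> I u" for w u unfolding I_def by (rule SUP_upper) simp
      have lower: "lower_setL e I" unfolding lower_setL_def
      proof (intro allI)
        fix u u'
        have "inf (e u u') (I u') \<le> I u" unfolding I_def[of u']
        proof (rule inf_SUP_le[OF F])
          fix w
          have "inf (e u u') (inf (D w) (?wb w u')) \<le> inf (D w) (?wb w u)"
            using wb_low[of w u' u] by (simp add: inf_commute le_infI2 inf_left_commute)
          then show "inf (e u u') (inf (D w) (?wb w u')) \<le> I u" using I_up order_trans by blast
        qed
        then show "inf (I u') (e u u') \<le> I u" by (simp add: inf_commute)
      qed
      have ne: "nonemptyL I" unfolding nonemptyL_def
      proof (rule top.extremum_uniqueI)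
        have "(SUP w. D w) = top" using Ds unfolding directedL_def nonemptyL_def by blast
        moreover have "D w \<le> (SUP u. I u)" for w
        proof -
          have "(SUP u. ?wb w u) = top" using dirwb[of w] unfolding directedL_def nonemptyL_def by blast
          then have "top \<le> (SUP u. ?wb w u)" by simp
          then have "inf (D w) top \<le> (SUP u. I u)"
            by (rule inf_SUP_le2[OF F]) (meson I_up SUP_upper UNIV_I order_trans)
          then show ?thesis by simp
        qed
        ultimately show "top \<le> (SUP u. I u)" by (metis SUP_least)
      qed
      have dir: "inf (I u1) (I u2) \<le> (SUP v. inf (inf (I v) (e u1 v)) (e u2 v))" for u1 u2
      proof -
        let ?R = "(SUP v. inf (inf (I v) (e u1 v)) (e u2 v))"
        have key: "inf (inf (D w2) (?wb w2 u2)) (inf (D w1) (?wb w1 u1)) \<le> ?R" for w1 w2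
        proof -
          let ?a = "inf (?wb w1 u1) (?wb w2 u2)"
          have "inf (D w1) (D w2) \<le> (SUP w. inf (inf (D w) (e w1 w)) (e w2 w))"
            using Ds unfolding directedL_def by blast
          then have "inf ?a (inf (D w1) (D w2)) \<le> ?R"
          proof (rule inf_SUP_le2[OF F])
            fix w
            have "inf ?a (inf (inf (D w) (e w1 w)) (e w2 w)) \<le> inf (D w) (inf (?wb w u1) (?wb w u2))"
            proof -
              have "inf ?a (inf (inf (D w) (e w1 w)) (e w2 w)) \<le> inf (?wb w1 u1) (e w1 w)" by (simp add: le_infI1 le_infI2)
              also have "\<dots> \<le> ?wb w u1" by (rule wb_up)
              finally have 1: "inf ?a (inf (inf (D w) (e w1 w)) (e w2 w)) \<le> ?wb w u1" .
              have "inf ?a (inf (inf (D w) (e w1 w)) (e w2 w)) \<le> inf (?wb w2 u2) (e w2 w)" by (simp add: le_infI1 le_infI2)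
              also have "\<dots> \<le> ?wb w u2" by (rule wb_up)
              finally have 2: "inf ?a (inf (inf (D w) (e w1 w)) (e w2 w)) \<le> ?wb w u2" .
              have 3: "inf ?a (inf (inf (D w) (e w1 w)) (e w2 w)) \<le> D w" by (simp add: le_infI1 le_infI2)
              show ?thesis using 1 2 3 by simp
            qed
            also have "\<dots> \<le> ?R"
            proof (rule inf_SUP_le2[OF F])
              show "inf (?wb w u1) (?wb w u2) \<le> (SUP v. inf (inf (?wb w v) (e u1 v)) (e u2 v))"
                using dirwb[of w] unfolding directedL_def by blast
              fix v
              have "inf (D w) (inf (inf (?wb w v) (e u1 v)) (e u2 v)) \<le> inf (inf (I v) (e u1 v)) (e u2 v)"
              proof -
                have "inf (D w) (inf (inf (?wb w v) (e u1 v)) (e u2 v)) \<le> inf (D w) (?wb w v)"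
                  by (rule inf_mono[OF order_refl le_infI1[OF inf_le1]])
                also have "\<dots> \<le> I v" by (rule I_up)
                finally have "inf (D w) (inf (inf (?wb w v) (e u1 v)) (e u2 v)) \<le> I v" .
                then show ?thesis
                  by (intro le_infI) (assumption, rule le_infI2[OF le_infI1[OF inf_le2]], rule le_infI2[OF inf_le2])
              qed
              also have "\<dots> \<le> ?R" by (rule SUP_upper) simp
              finally show "inf (D w) (inf (inf (?wb w v) (e u1 v)) (e u2 v)) \<le> ?R" .
            qed
            finally show "inf ?a (inf (inf (D w) (e w1 w)) (e w2 w)) \<le> ?R" .
          qed
          moreover have "inf (inf (D w2) (?wb w2 u2)) (inf (D w1) (?wb w1 u1)) = inf ?a (inf (D w1) (D w2))"
            by (simp add: inf_commute inf_left_commute inf_assoc)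
          ultimately show ?thesis by simp
        qed
        have "inf (I u1) (I u2) \<le> ?R" unfolding I_def[of u2]
        proof (rule inf_SUP_le[OF F])
          fix w2
          have "inf (inf (D w2) (?wb w2 u2)) (I u1) \<le> ?R" unfolding I_def[of u1]
            by (rule inf_SUP_le[OF F]) (rule key)
          then show "inf (I u1) (inf (D w2) (?wb w2 u2)) \<le> ?R" by (simp add: inf_commute)
        qed
        then show ?thesis .
      qed
      have idl: "idealL e I" unfolding idealL_def directedL_def using lower ne dir by blast
      have supI: "is_Lsup imp e I s" unfolding is_Lsup_def
      proof
        fix y
        show "e s y = subL imp I (\<lambda>z. e z y)"
        proof (rule le_eqI)
          fix c
          have "c \<le> e s y \<longleftrightarrow> (\<forall>w. inf c (D w) \<le> e w y)" by (rule lsup_char[OF F conjunct2[OF Ds]])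
          also have "\<dots> \<longleftrightarrow> (\<forall>w u. inf (inf c (D w)) (?wb w u) \<le> e u y)"
            using lsup_char[OF F supwb] by blast
          also have "\<dots> \<longleftrightarrow> (\<forall>u. inf c (I u) \<le> e u y)"
          proof
            assume h: "\<forall>w u. inf (inf c (D w)) (?wb w u) \<le> e u y"
            show "\<forall>u. inf c (I u) \<le> e u y" unfolding I_def
              by (intro allI inf_SUP_le[OF F]) (use h in \<open>simp add: inf_assoc\<close>)
          next
            assume h: "\<forall>u. inf c (I u) \<le> e u y"
            show "\<forall>w u. inf (inf c (D w)) (?wb w u) \<le> e u y"
            proof (intro allI)
              fix w u
              have "inf (inf c (D w)) (?wb w u) \<le> inf c (I u)" using I_up[of w u]
                by (simp add: inf_assoc le_infI2)
              then show "inf (inf c (D w)) (?wb w u) \<le> e u y" using h order_trans by blast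
            qed
          qed
          also have "\<dots> \<longleftrightarrow> c \<le> subL imp I (\<lambda>z. e z y)"
            unfolding subL_def le_INF_iff fr[OF F] by simp
          finally show "c \<le> e s y \<longleftrightarrow> c \<le> subL imp I (\<lambda>z. e z y)" .
        qed
      qed
      have "?wb s z = inf (?wb s z) (e s s)" using refl by simp
      also have "\<dots> \<le> I z" by (rule wb_id[OF idl supI])
      also have "\<dots> \<le> (SUP x. inf (?wb x z) (D x))" unfolding I_def by (simp add: inf_commute)
      finally show "?wb s z \<le> (SUP x. inf (?wb x z) (D x))" .
    next
      show "(SUP x. inf (?wb x z) (D x)) \<le> ?wb s z"
      proof (rule SUP_least)
        fix x
        have "inf (?wb x z) (D x) \<le> inf (?wb x z) (e x s)" using lsup_le Ds by (meson inf_mono order_refl)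
        also have "\<dots> \<le> ?wb s z" by (rule wb_up)
        finally show "inf (?wb x z) (D x) \<le> ?wb s z" .
      qed
    qed
  qed
  show ?thesis
  proof (intro ext antisym)
    fix x y
    let ?c = "spec_order imp (scottL imp e) x y"
    have "inf ?c (?wb x z) \<le> e z y" for z
    proof -
      have "?c \<le> imp (?wb x z) (?wb y z)" unfolding spec_order_def
        using opn[of z] by (rule INF_lower2) simp
      then have "inf ?c (?wb x z) \<le> ?wb y z" using fr[OF F] by blast
      then show ?thesis using wb_le order_trans by blast
    qed
    then show "?c \<le> e x y" using lsup_char[OF F supwb] by blast
  next
    fix x y
    show "e x y \<le> spec_order imp (scottL imp e) x y" unfolding spec_order_def
    proof (rule INF_greatest)
      fix A assume "A \<in> scottL imp e"
      then have "inf (A x) (e x y) \<le> A y" unfolding scottL_def upper_setL_def by blast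
      then show "e x y \<le> imp (A x) (A y)" using fr[OF F] by (simp add: inf_commute)
    qed
  qed
qed

lemma part1:
  fixes imp :: "'l::complete_lattice \<Rightarrow> 'l \<Rightarrow> 'l" and T :: "('a \<Rightarrow> 'l) set"
  assumes F: "is_frame_impl imp" and top: "Ltopology T"
    and lsc: "locally_super_compact imp T" and sob: "L_sober T"
  shows "scottL imp (spec_order imp T) = T"
proof -
  have T_inf: "\<And>U V. U \<in> T \<Longrightarrow> V \<in> T \<Longrightarrow> inf U V \<in> T"
    and T_Sup: "\<And>\<U>. \<U> \<subseteq> T \<Longrightarrow> Sup \<U> \<in> T" and T_const: "\<And>c. (\<lambda>_. c) \<in> T"
    using top unfolding Ltopology_def by auto
  have T0: "\<And>x y. (\<forall>U\<in>T. U x = U y) \<Longrightarrow> x = y"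
    and sober: "\<And>p. is_point T p \<Longrightarrow> \<exists>x. \<forall>U\<in>T. p U = U x"
    using sob unfolding L_sober_def by auto
  define sp where "sp = spec_order imp T"
  have sp_char: "c \<le> sp x y \<longleftrightarrow> (\<forall>U\<in>T. inf c (U x) \<le> U y)" for c x y
    unfolding sp_def spec_order_def le_INF_iff fr[OF F] ..
  have sp_refl: "sp x x = top" for x
    by (rule top.extremum_uniqueI) (simp add: sp_char)
  have sp_tr: "inf (sp x y) (sp y z) \<le> sp x z" for x y z
    unfolding sp_char[of _ x z]
  proof
    fix U assume U: "U \<in> T"
    have "inf (inf (sp x y) (sp y z)) (U x) \<le> inf (sp y z) (inf (sp x y) (U x))"
      by (simp add: inf_commute inf_left_commute)
    also have "\<dots> \<le> inf (sp y z) (U y)" using sp_char[of "sp x y" x y] U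
      by (intro inf_mono order_refl) blast
    also have "\<dots> \<le> U z" using sp_char[of "sp y z" y z] U by (simp add: inf_commute)
    finally show "inf (inf (sp x y) (sp y z)) (U x) \<le> U z" .
  qed
  have sp_U: "U \<in> T \<Longrightarrow> inf (U x) (sp x y) \<le> U y" for U x y
    using sp_char[of "sp x y" x y] by (simp add: inf_commute)
  have sub1: "T \<subseteq> scottL imp sp"
  proof
    fix U assume U: "U \<in> T"
    show "U \<in> scottL imp sp" unfolding scottL_def
    proof (intro CollectI conjI allI impI)
      show "upper_setL sp U" unfolding upper_setL_def using sp_U[OF U] by blast
      fix D s assume Ds: "directedL sp D \<and> is_Lsup imp sp D s"
      define p where "p V = (SUP x. inf (V x) (D x))" for V
      have Dtop: "(SUP x. D x) = top" using Ds unfolding directedL_def nonemptyL_def by blast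
      have Ddir: "inf (D x) (D y) \<le> (SUP z. inf (inf (D z) (sp x z)) (sp y z))" for x y
        using Ds unfolding directedL_def by blast
      have pmeet: "p (inf V W) = inf (p V) (p W)" if V: "V \<in> T" and W: "W \<in> T" for V W
      proof (rule antisym)
        show "p (inf V W) \<le> inf (p V) (p W)" unfolding p_def
        proof (rule SUP_least)
          fix x
          have a: "inf (V x) (D x) \<le> (SUP x. inf (V x) (D x))" by (rule SUP_upper) simp
          have b: "inf (W x) (D x) \<le> (SUP x. inf (W x) (D x))" by (rule SUP_upper) simp
          have c: "inf (inf V W x) (D x) \<le> inf (V x) (D x)" by (intro inf_mono) auto
          have d: "inf (inf V W x) (D x) \<le> inf (W x) (D x)" by (intro inf_mono) auto
          show "inf (inf V W x) (D x) \<le> inf (SUP x. inf (V x) (D x)) (SUP x. inf (W x) (D x))"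
            using order_trans[OF c a] order_trans[OF d b] by (rule le_infI)
        qed
        let ?P = "p (inf V W)"
        have key: "inf (inf (W y) (D y)) (inf (V x) (D x)) \<le> ?P" for x y
        proof -
          have "inf (inf (V x) (W y)) (inf (D x) (D y)) \<le> ?P"
          proof (rule inf_SUP_le2[OF F Ddir])
            fix z
            have "inf (inf (V x) (W y)) (inf (inf (D z) (sp x z)) (sp y z)) \<le> inf (inf (V x) (sp x z)) (inf (W y) (sp y z))"
              by (intro le_infI le_infI1[OF inf_le1] le_infI2[OF le_infI1[OF inf_le2]] le_infI1[OF inf_le2] le_infI2[OF inf_le2])
            moreover have "inf (inf (V x) (W y)) (inf (inf (D z) (sp x z)) (sp y z)) \<le> D z"
              by (simp add: le_infI1 le_infI2)
            ultimately have "inf (inf (V x) (W y)) (inf (inf (D z) (sp x z)) (sp y z)) \<le> inf (inf V W z) (D z)"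
            proof -
              assume h1: "inf (inf (V x) (W y)) (inf (inf (D z) (sp x z)) (sp y z)) \<le> inf (inf (V x) (sp x z)) (inf (W y) (sp y z))"
                and h2: "inf (inf (V x) (W y)) (inf (inf (D z) (sp x z)) (sp y z)) \<le> D z"
              have "inf (inf (V x) (sp x z)) (inf (W y) (sp y z)) \<le> inf V W z"
                unfolding inf_apply by (rule inf_mono[OF sp_U[OF V] sp_U[OF W]])
              with h1 have "inf (inf (V x) (W y)) (inf (inf (D z) (sp x z)) (sp y z)) \<le> inf V W z"
                by (rule order_trans)
              then show ?thesis using h2 by (rule le_infI)
            qed
            also have "\<dots> \<le> ?P" unfolding p_def by (rule SUP_upper) simp
            finally show "inf (inf (V x) (W y)) (inf (inf (D z) (sp x z)) (sp y z)) \<le> ?P" .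
          qed
          moreover have "inf (inf (W y) (D y)) (inf (V x) (D x)) = inf (inf (V x) (W y)) (inf (D x) (D y))"
            by (simp add: inf_commute inf_left_commute inf_assoc)
          ultimately show ?thesis by simp
        qed
        have "inf (p V) (p W) \<le> ?P" unfolding p_def[of W]
        proof (rule inf_SUP_le[OF F])
          fix y
          have "inf (inf (W y) (D y)) (p V) \<le> ?P" unfolding p_def[of V]
            by (rule inf_SUP_le[OF F]) (rule key)
          then show "inf (p V) (inf (W y) (D y)) \<le> ?P" by (simp add: inf_commute)
        qed
        then show "inf (p V) (p W) \<le> ?P" .
      qed
      have psup: "p (Sup \<U>) = (SUP V\<in>\<U>. p V)" for \<U>
      proof (rule antisym)
        show "p (Sup \<U>) \<le> (SUP V\<in>\<U>. p V)" unfolding p_def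
        proof (rule SUP_least)
          fix x
          have "inf (D x) (SUP V\<in>\<U>. V x) \<le> (SUP V\<in>\<U>. SUP x. inf (V x) (D x))"
          proof (rule inf_SUP_le[OF F])
            fix V assume "V \<in> \<U>"
            have "inf (D x) (V x) \<le> (SUP x. inf (V x) (D x))" by (rule SUP_upper2[of x]) (auto simp: inf_commute)
            also have "\<dots> \<le> (SUP V\<in>\<U>. SUP x. inf (V x) (D x))" using \<open>V \<in> \<U>\<close> by (rule SUP_upper)
            finally show "inf (D x) (V x) \<le> (SUP V\<in>\<U>. SUP x. inf (V x) (D x))" .
          qed
          then show "inf (Sup \<U> x) (D x) \<le> (SUP V\<in>\<U>. SUP x. inf (V x) (D x))"
            by (simp add: Sup_apply inf_commute)
        qed
        show "(SUP V\<in>\<U>. p V) \<le> p (Sup \<U>)" unfolding p_def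
        proof (intro SUP_least)
          fix V x assume "V \<in> \<U>"
          then have "V x \<le> Sup \<U> x" unfolding Sup_apply by (rule SUP_upper[where f="\<lambda>f. f x"])
          then have "inf (V x) (D x) \<le> inf (Sup \<U> x) (D x)" by (rule inf_mono) simp
          also have "\<dots> \<le> (SUP x. inf (Sup \<U> x) (D x))" by (rule SUP_upper) simp
          finally show "inf (V x) (D x) \<le> (SUP x. inf (Sup \<U> x) (D x))" .
        qed
      qed
      have pconst: "p (\<lambda>_. c) = c" for c
      proof -
        have "p (\<lambda>_. c) = inf c (SUP x. D x)" unfolding p_def by (rule inf_SUP_eq[OF F, symmetric])
        then show ?thesis using Dtop by simp
      qed
      have "is_point T p" unfolding is_point_def using pmeet psup pconst by blast
      then obtain t where pt: "\<And>V. V \<in> T \<Longrightarrow> p V = V t" using sober by blast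
      have tsup: "is_Lsup imp sp D t" unfolding is_Lsup_def
      proof
        fix y
        show "sp t y = subL imp D (\<lambda>z. sp z y)"
        proof (rule le_eqI)
          fix c
          have "c \<le> sp t y \<longleftrightarrow> (\<forall>V\<in>T. inf c (p V) \<le> V y)" unfolding sp_char using pt by simp
          also have "\<dots> \<longleftrightarrow> (\<forall>V\<in>T. \<forall>x. inf (inf c (D x)) (V x) \<le> V y)"
          proof (intro ball_cong refl iffI allI)
            fix V x assume "inf c (p V) \<le> V y"
            moreover have "inf (inf c (D x)) (V x) \<le> inf c (p V)" unfolding p_def
              by (simp add: le_infI1 le_infI2 SUP_upper2[of x] inf_commute)
            ultimately show "inf (inf c (D x)) (V x) \<le> V y" by (rule order_trans[rotated])
          next
            fix V assume "\<forall>x. inf (inf c (D x)) (V x) \<le> V y"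
            then show "inf c (p V) \<le> V y" unfolding p_def
              by (intro inf_SUP_le[OF F]) (simp add: inf_commute inf_left_commute)
          qed
          also have "\<dots> \<longleftrightarrow> c \<le> subL imp D (\<lambda>z. sp z y)"
            unfolding subL_def le_INF_iff fr[OF F] sp_char by blast
          finally show "c \<le> sp t y \<longleftrightarrow> c \<le> subL imp D (\<lambda>z. sp z y)" .
        qed
      qed
      have ssup: "is_Lsup imp sp D s" using Ds by blast
      have "top \<le> sp s t" unfolding lsup_char[OF F ssup]
        using lsup_char[OF F tsup, of top t] sp_refl by simp
      moreover have "top \<le> sp t s" unfolding lsup_char[OF F tsup]
        using lsup_char[OF F ssup, of top s] sp_refl by simp
      ultimately have "\<forall>V\<in>T. V s = V t" unfolding sp_char by (simp add: antisym)
      then have "s = t" by (rule T0)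
      then show "U s = (SUP x. inf (U x) (D x))" using pt[OF U] unfolding p_def by simp
    qed
  qed
  define pt where "pt B = (SOME x. \<forall>U\<in>T. subL imp B U = U x)" for B
  have ptU: "subL imp B U = U (pt B)" if B: "B \<in> SC imp T" and U: "U \<in> T" for B U
  proof -
    have sc: "super_compact imp T B" using B by (simp add: SC_def)
    have "is_point T (\<lambda>U. subL imp B U)" unfolding is_point_def
    proof (intro conjI ballI allI impI)
      fix U V assume "U \<in> T" "V \<in> T"
      show "subL imp B (inf U V) = inf (subL imp B U) (subL imp B V)"
        by (rule le_eqI) (auto simp: subL_def le_INF_iff fr[OF F])
    next
      fix \<U> assume "\<U> \<subseteq> T"
      then show "subL imp B (Sup \<U>) = (SUP U\<in>\<U>. subL imp B U)"
        using sc unfolding super_compact_def by blast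
    next
      fix c
      have Bt: "(SUP x. B x) = top" using sc unfolding super_compact_def nonemptyL_def by blast
      show "subL imp B (\<lambda>_. c) = c"
      proof (rule le_eqI)
        fix d
        have "d \<le> subL imp B (\<lambda>_. c) \<longleftrightarrow> (\<forall>x. inf d (B x) \<le> c)"
          by (simp add: subL_def le_INF_iff fr[OF F])
        also have "\<dots> \<longleftrightarrow> inf d (SUP x. B x) \<le> c"
        proof
          assume "\<forall>x. inf d (B x) \<le> c" then show "inf d (SUP x. B x) \<le> c"
            by (intro inf_SUP_le[OF F]) simp
        next
          assume h: "inf d (SUP x. B x) \<le> c"
          show "\<forall>x. inf d (B x) \<le> c"
          proof
            fix x
            have "inf d (B x) \<le> inf d (SUP x. B x)" by (rule inf_mono) (simp_all add: SUP_upper)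
            then show "inf d (B x) \<le> c" by (rule order_trans[OF _ h])
          qed
        qed
        also have "\<dots> \<longleftrightarrow> d \<le> c" using Bt by simp
        finally show "d \<le> subL imp B (\<lambda>_. c) \<longleftrightarrow> d \<le> c" .
      qed
    qed
    then have "\<exists>x. \<forall>U\<in>T. subL imp B U = U x" using sober by blast
    then have "\<forall>U\<in>T. subL imp B U = U (pt B)" unfolding pt_def by (rule someI_ex)
    then show ?thesis using U by blast
  qed
  have int_T: "interiorL T B \<in> T" for B unfolding interiorL_def by (rule T_Sup) blast
  have int_le: "interiorL T B \<le> B" for B unfolding interiorL_def by (rule Sup_least) blast
  have B_sp: "B z \<le> sp (pt B) z" if B: "B \<in> SC imp T" for B z
    unfolding sp_char
  proof
    fix U assume U: "U \<in> T"
    have "subL imp B U \<le> imp (B z) (U z)" unfolding subL_def by (rule INF_lower) simp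
    then have "U (pt B) \<le> imp (B z) (U z)" using ptU[OF B U] by simp
    then show "inf (B z) (U (pt B)) \<le> U z" using fr[OF F] by (simp add: inf_commute)
  qed
  have lscU: "U x = (SUP B\<in>SC imp T. inf (U (pt B)) (interiorL T B x))" if U: "U \<in> T" for U x
  proof -
    have "U = (SUP B\<in>SC imp T. (\<lambda>x. inf (subL imp B U) (interiorL T B x)))"
      using lsc U unfolding locally_super_compact_def by blast
    then have "U x = (SUP B\<in>SC imp T. (\<lambda>x. inf (subL imp B U) (interiorL T B x))) x"
      by (rule fun_cong)
    also have "\<dots> = (SUP B\<in>SC imp T. inf (subL imp B U) (interiorL T B x))"
      by (rule SUP_apply)
    also have "\<dots> = (SUP B\<in>SC imp T. inf (U (pt B)) (interiorL T B x))"
      by (rule SUP_cong) (simp_all add: ptU[OF _ U])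
    finally show ?thesis .
  qed
  have sub2: "scottL imp sp \<subseteq> T"
  proof
    fix A assume A: "A \<in> scottL imp sp"
    have Aup: "inf (A x) (sp x y) \<le> A y" for x y using A unfolding scottL_def upper_setL_def by blast
    have Asc: "A s = (SUP x. inf (A x) (D x))" if "directedL sp D" "is_Lsup imp sp D s" for D s
      using A that unfolding scottL_def by blast
    have "A \<le> interiorL T A"
    proof (rule le_funI)
      fix x
      define D where "D y = (SUP B\<in>{B\<in>SC imp T. pt B = y}. interiorL T B x)" for y
      have D_up: "interiorL T B x \<le> D (pt B)" if "B \<in> SC imp T" for B
        unfolding D_def using that by (intro SUP_upper) simp
      have dir: "directedL sp D" unfolding directedL_def nonemptyL_def
      proof (intro conjI allI)
        have "top = (SUP B\<in>SC imp T. inf top (interiorL T B x))"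
          using lscU[OF T_const[of top], of x] by simp
        also have "\<dots> \<le> (SUP y. D y)"
        proof (rule SUP_least)
          fix B assume B: "B \<in> SC imp T"
          have "D (pt B) \<le> (SUP y. D y)" by (rule SUP_upper) simp
          then show "inf top (interiorL T B x) \<le> (SUP y. D y)" using D_up[OF B] by simp
        qed
        finally show "(SUP y. D y) = top" by (simp add: top.extremum_unique)
        fix y1 y2
        let ?R = "SUP z. inf (inf (D z) (sp y1 z)) (sp y2 z)"
        have key: "inf (interiorL T B2 x) (interiorL T B1 x) \<le> ?R"
          if B1: "B1 \<in> SC imp T" "pt B1 = y1" and B2: "B2 \<in> SC imp T" "pt B2 = y2" for B1 B2
        proof -
          define W where "W = inf (interiorL T B2) (interiorL T B1)"
          have WT: "W \<in> T" unfolding W_def by (intro T_inf int_T)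
          have "W x \<le> ?R" unfolding lscU[OF WT, of x]
          proof (rule SUP_least)
            fix B assume B: "B \<in> SC imp T"
            have "W (pt B) \<le> B1 (pt B)" unfolding W_def using int_le[of B1]
              by (simp add: le_funD le_infI2)
            also have "\<dots> \<le> sp y1 (pt B)" using B_sp[OF B1(1)] B1(2) by simp
            finally have 1: "W (pt B) \<le> sp y1 (pt B)" .
            have "W (pt B) \<le> B2 (pt B)" unfolding W_def using int_le[of B2]
              by (simp add: le_funD le_infI1)
            also have "\<dots> \<le> sp y2 (pt B)" using B_sp[OF B2(1)] B2(2) by simp
            finally have 2: "W (pt B) \<le> sp y2 (pt B)" .
            have "inf (W (pt B)) (interiorL T B x) \<le> inf (inf (D (pt B)) (sp y1 (pt B))) (sp y2 (pt B))"
              using 1 2 D_up[OF B] by (simp add: le_infI1 le_infI2)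
            also have "\<dots> \<le> ?R" by (rule SUP_upper) simp
            finally show "inf (W (pt B)) (interiorL T B x) \<le> ?R" .
          qed
          then show ?thesis unfolding W_def by simp
        qed
        have "inf (D y1) (D y2) \<le> ?R" unfolding D_def[of y2]
        proof (rule inf_SUP_le[OF F])
          fix B2 assume B2: "B2 \<in> {B \<in> SC imp T. pt B = y2}"
          have "inf (interiorL T B2 x) (D y1) \<le> ?R" unfolding D_def[of y1]
            by (rule inf_SUP_le[OF F]) (use key B2 in blast)
          then show "inf (D y1) (interiorL T B2 x) \<le> ?R" by (simp add: inf_commute)
        qed
        then show "inf (D y1) (D y2) \<le> ?R" .
      qed
      have dsup: "is_Lsup imp sp D x" unfolding is_Lsup_def
      proof
        fix y
        show "sp x y = subL imp D (\<lambda>z. sp z y)"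
        proof (rule le_eqI)
          fix c
          have eq2: "c \<le> subL imp D (\<lambda>z. sp z y) \<longleftrightarrow> (\<forall>B\<in>SC imp T. inf c (interiorL T B x) \<le> sp (pt B) y)"
          proof -
            have "c \<le> subL imp D (\<lambda>z. sp z y) \<longleftrightarrow> (\<forall>z. inf c (D z) \<le> sp z y)"
              unfolding subL_def le_INF_iff fr[OF F] by simp
            also have "\<dots> \<longleftrightarrow> (\<forall>B\<in>SC imp T. inf c (interiorL T B x) \<le> sp (pt B) y)"
            proof
              assume h: "\<forall>z. inf c (D z) \<le> sp z y"
              show "\<forall>B\<in>SC imp T. inf c (interiorL T B x) \<le> sp (pt B) y"
              proof
                fix B assume B: "B \<in> SC imp T"
                have "inf c (interiorL T B x) \<le> inf c (D (pt B))" using D_up[OF B] by (rule inf_mono[OF order_refl])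
                then show "inf c (interiorL T B x) \<le> sp (pt B) y" using h order_trans by blast
              qed
            next
              assume h: "\<forall>B\<in>SC imp T. inf c (interiorL T B x) \<le> sp (pt B) y"
              show "\<forall>z. inf c (D z) \<le> sp z y" unfolding D_def
                by (intro allI inf_SUP_le[OF F]) (use h in auto)
            qed
            finally show ?thesis .
          qed
          have eq1: "c \<le> sp x y \<longleftrightarrow> (\<forall>B\<in>SC imp T. inf c (interiorL T B x) \<le> sp (pt B) y)"
          proof
            assume h: "c \<le> sp x y"
            show "\<forall>B\<in>SC imp T. inf c (interiorL T B x) \<le> sp (pt B) y"
            proof
              fix B assume B: "B \<in> SC imp T"
              have "interiorL T B x \<le> sp (pt B) x"
                by (rule order_trans[OF le_funD[OF int_le[of B]] B_sp[OF B]])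
              then have "inf c (interiorL T B x) \<le> inf (sp (pt B) x) (sp x y)" using h
                by (simp add: le_infI1 le_infI2)
              also have "\<dots> \<le> sp (pt B) y" by (rule sp_tr)
              finally show "inf c (interiorL T B x) \<le> sp (pt B) y" .
            qed
          next
            assume h: "\<forall>B\<in>SC imp T. inf c (interiorL T B x) \<le> sp (pt B) y"
            show "c \<le> sp x y" unfolding sp_char
            proof
              fix U assume U: "U \<in> T"
              show "inf c (U x) \<le> U y" unfolding lscU[OF U, of x]
              proof (rule inf_SUP_le[OF F])
                fix B assume B: "B \<in> SC imp T"
                have "inf c (inf (U (pt B)) (interiorL T B x)) \<le> inf (U (pt B)) (sp (pt B) y)"
                proof -
                  have "inf c (inf (U (pt B)) (interiorL T B x)) \<le> inf c (interiorL T B x)"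
                    by (intro inf_mono) simp_all
                  also have "\<dots> \<le> sp (pt B) y" using h B by blast
                  finally have "inf c (inf (U (pt B)) (interiorL T B x)) \<le> sp (pt B) y" .
                  then show ?thesis by (simp add: le_infI2)
                qed
                also have "\<dots> \<le> U y" by (rule sp_U[OF U])
                finally show "inf c (inf (U (pt B)) (interiorL T B x)) \<le> U y" .
              qed
            qed
          qed
          show "c \<le> sp x y \<longleftrightarrow> c \<le> subL imp D (\<lambda>z. sp z y)" using eq1 eq2 by simp
        qed
      qed
      have "A x = (SUP y. inf (A y) (D y))" by (rule Asc[OF dir dsup])
      also have "\<dots> \<le> interiorL T A x"
      proof (rule SUP_least)
        fix y
        show "inf (A y) (D y) \<le> interiorL T A x" unfolding D_def[of y]
        proof (rule inf_SUP_le[OF F])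
          fix B assume B: "B \<in> {B \<in> SC imp T. pt B = y}"
          define W where "W = inf (\<lambda>_. A y) (interiorL T B)"
          have WT: "W \<in> T" unfolding W_def by (intro T_inf T_const int_T)
          have "W \<le> A"
          proof (rule le_funI)
            fix z
            have "W z \<le> inf (A (pt B)) (sp (pt B) z)" unfolding W_def using B int_le[of B] B_sp[of B z]
            proof -
              have "interiorL T B z \<le> B z" using int_le[of B] by (simp add: le_fun_def)
              also have "\<dots> \<le> sp (pt B) z" using B B_sp by blast
              finally have "interiorL T B z \<le> sp (pt B) z" .
              then show "inf (\<lambda>_. A y) (interiorL T B) z \<le> inf (A (pt B)) (sp (pt B) z)"
                using B by (simp add: le_infI2)
            qed
            also have "\<dots> \<le> A z" by (rule Aup)
            finally show "W z \<le> A z" .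
          qed
          then have "W \<le> interiorL T A" unfolding interiorL_def using WT by (intro Sup_upper) blast
          then show "inf (A y) (interiorL T B x) \<le> interiorL T A x" unfolding W_def
            by (metis inf_apply le_funD)
        qed
      qed
      finally show "A x \<le> interiorL T A x" .
    qed
    then have "A = interiorL T A" using int_le[of A] by (simp add: antisym)
    then show "A \<in> T" using int_T by metis
  qed
  show ?thesis using sub1 sub2 unfolding sp_def by blast
qed

theorem theorem4p7:
  fixes imp :: "'l::complete_lattice \<Rightarrow> 'l \<Rightarrow> 'l"
    and T :: "('a \<Rightarrow> 'l) set"
    and e :: "'b \<Rightarrow> 'b \<Rightarrow> 'l"
  assumes "is_frame_impl imp"
  shows "(Ltopology T \<and> locally_super_compact imp T \<and> L_sober T
            \<longrightarrow> scottL imp (spec_order imp T) = T)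
       \<and> (continuous_L_dcpo imp e \<longrightarrow> spec_order imp (scottL imp e) = e)"
  using part1[OF assms] part2[OF assms] by blast

end
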